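(* Fix $a\in(0,1/2]$ and an integer $m\ge2$. Then \[ \lim_{n\to\infty}\overline{\Phi}_m(n;a)=\begin{cases}0, & m \text{ even},\\ \frac{1}{2a}-1, & m\text{ odd}.\end{cases} \]
   Context: For integers $n\ge1$, $k\in[0:n]$ and real $x$, the Krawtchouk polynomial is $K_k(x)=K_k^{(n)}(x):=\sum_{j=0}^{k}(-1)^{j}\binom{x}{j}\binom{n-x}{k-j}$, with generalized binomial coefficients. Here $[m:n]=\{m,\dots,n\}$. For $n\ge m$ and real $a\in(0,1/2]$, $\overline{\Phi}_m(n;a)$ is the optimal value of the linear program: maximize $-\sum_{k=1}^{n}\left[K_k(0)+\left(\frac1a-1\right)K_k(m)\right]x_k$ over $(x_1,\dots,x_n)\in\mathbb{R}^n$ subject to $x_k\ge0$ for $k\in[1:n]$ and $\sum_{k=1}^{n}[K_k(m)-K_k(i)]x_k\ge-1$ for all $i\in[1:m-1]\cup[m+1:n]$. *)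

theory Defs
  imports Complex_Main
begin

definition krawtchouk :: "nat \<Rightarrow> nat \<Rightarrow> real \<Rightarrow> real" where
  "krawtchouk n k x =
     (\<Sum>j=0..k. (-1) ^ j * (x gchoose j) * ((real n - x) gchoose (k - j)))"

definition phi_obj :: "nat \<Rightarrow> nat \<Rightarrow> real \<Rightarrow> (nat \<Rightarrow> real) \<Rightarrow> real" where
  "phi_obj m n a x =
     - (\<Sum>k=1..n. (krawtchouk n k 0 + (1 / a - 1) * krawtchouk n k (real m)) * x k)"

definition phi_feasible :: "nat \<Rightarrow> nat \<Rightarrow> (nat \<Rightarrow> real) set" where
  "phi_feasible m n =
     {x. (\<forall>k\<in>{1..n}. x k \<ge> 0) \<and>
         (\<forall>i\<in>{1..n} - {m}.
            (\<Sum>k=1..n. (krawtchouk n k (real m) - krawtchouk n k (real i)) * x k) \<ge> -1)}"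

definition PhiBar :: "nat \<Rightarrow> nat \<Rightarrow> real \<Rightarrow> real" where
  "PhiBar m n a = (SUP x\<in>phi_feasible m n. phi_obj m n a x)"

end

theory Submission imports Defs begin

lemma count_split:
  assumes "finite U" "D \<subseteq> U" and that: "i \<le> k"
  shows "card {z. z \<subseteq> U \<and> card z = k \<and> card (z \<inter> D) = i}
         = (card D choose i) * ((card U - card D) choose (k - i))" (is "card ?S = _")
proof -
  let ?A = "{a. a \<subseteq> D \<and> card a = i}"
  let ?B = "{b. b \<subseteq> U - D \<and> card b = k - i}"
  have fD: "finite D" using assms finite_subset by blast
  have img: "?S = (\<lambda>(a,b). a \<union> b) ` (?A \<times> ?B)"
  proof
    show "?S \<subseteq> (\<lambda>(a,b). a \<union> b) ` (?A \<times> ?B)"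
    proof
      fix z assume z: "z \<in> ?S"
      have fz: "finite z" using z assms finite_subset by blast
      have "card z = card (z \<inter> D) + card (z - D)"
        using fz by (rule card_Int_Diff)
      then have "card (z - D) = k - i" using z by auto
      moreover have "z = (z \<inter> D) \<union> (z - D)" by blast
      ultimately show "z \<in> (\<lambda>(a,b). a \<union> b) ` (?A \<times> ?B)"
        using z by (intro image_eqI[of _ _ "(z \<inter> D, z - D)"]) auto
    qed
  next
    show "(\<lambda>(a,b). a \<union> b) ` (?A \<times> ?B) \<subseteq> ?S"
    proof
      fix z assume "z \<in> (\<lambda>(a,b). a \<union> b) ` (?A \<times> ?B)"
      then obtain a b where ab: "a \<in> ?A" "b \<in> ?B" "z = a \<union> b" by auto
      have fa: "finite a" "finite b" using ab fD assms finite_subset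
        by (auto intro: finite_subset[of _ U] finite_subset[of _ D])
      have disj: "a \<inter> b = {}" using ab by auto
      have "card z = card a + card b" using ab fa disj card_Un_disjoint by blast
      moreover have "z \<inter> D = a" using ab by auto
      ultimately show "z \<in> ?S" using ab that assms by auto
    qed
  qed
  have inj: "inj_on (\<lambda>(a,b). a \<union> b) (?A \<times> ?B)"
  proof (rule inj_onI, clarify)
    fix a b a' b'
    assume "a \<subseteq> D" "b \<subseteq> U - D" "a' \<subseteq> D" "b' \<subseteq> U - D" "a \<union> b = a' \<union> b'"
    then show "a = a' \<and> b = b'" by blast
  qed
  have cUD: "card (U - D) = card U - card D" using assms fD card_Diff_subset by blast
  have "card ?S = card (?A \<times> ?B)" unfolding img by (rule card_image[OF inj])
  also have "\<dots> = card ?A * card ?B" by (rule card_cartesian_product)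
  also have "\<dots> = (card D choose i) * (card (U - D) choose (k - i))"
    using n_subsets[OF fD, where k=i] n_subsets[OF finite_Diff[OF assms(1)], where k="k - i"] by simp
  finally show ?thesis unfolding cUD .
qed


definition sg :: "nat set \<Rightarrow> nat set \<Rightarrow> real" where
  "sg D z = (-1) ^ card (z \<inter> D)"

definition Zs :: "nat \<Rightarrow> nat \<Rightarrow> nat set set" where
  "Zs n k = {z. z \<subseteq> {0..<n} \<and> card z = k}"

lemma finite_Zs: "finite (Zs n k)"
  unfolding Zs_def by (rule finite_subset[of _ "Pow {0..<n}"]) auto

lemma kraw_nat:
  assumes "d \<le> n"
  shows "krawtchouk n k (real d) = (\<Sum>i=0..k. (-1)^i * real (d choose i) * real ((n-d) choose (k-i)))"
  unfolding krawtchouk_def using assms by (simp add: binomial_gbinomial of_nat_diff)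

lemma lemA:
  assumes "D \<subseteq> {0..<n}"
  shows "(\<Sum>z\<in>Zs n k. sg D z) = krawtchouk n k (real (card D))"
proof -
  have fD: "finite D" using assms finite_subset by blast
  have cD: "card D \<le> n" using card_mono[OF finite_atLeastLessThan assms] by simp
  have "(\<Sum>z\<in>Zs n k. sg D z) = (\<Sum>z\<in>Zs n k. \<Sum>i=0..k. (if card (z \<inter> D) = i then (-1)^i else 0))"
  proof (rule sum.cong[OF refl])
    fix z assume z: "z \<in> Zs n k"
    have fz: "finite z" using z unfolding Zs_def using finite_subset by blast
    have "card (z \<inter> D) \<le> k" using z card_mono[OF fz, of "z \<inter> D"] unfolding Zs_def by auto
    then show "sg D z = (\<Sum>i=0..k. (if card (z \<inter> D) = i then (-1)^i else 0))"
      unfolding sg_def by (simp add: sum.delta')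
  qed
  also have "\<dots> = (\<Sum>i=0..k. \<Sum>z\<in>Zs n k. (if card (z \<inter> D) = i then (-1)^i else 0))"
    by (rule sum.swap)
  also have "\<dots> = (\<Sum>i=0..k. (-1)^i * real (card {z\<in>Zs n k. card (z \<inter> D) = i}))"
  proof (rule sum.cong[OF refl])
    fix i
    have "(\<Sum>z\<in>Zs n k. (if card (z \<inter> D) = i then (-1::real)^i else 0))
          = (\<Sum>z\<in>{z\<in>Zs n k. card (z \<inter> D) = i}. (-1)^i)"
      by (rule sum.inter_filter[symmetric, OF finite_Zs])
    then show "(\<Sum>z\<in>Zs n k. (if card (z \<inter> D) = i then (-1::real)^i else 0)) = (-1)^i * real (card {z\<in>Zs n k. card (z \<inter> D) = i})"
      by simp
  qed
  also have "\<dots> = (\<Sum>i=0..k. (-1)^i * real (card D choose i) * real ((n - card D) choose (k-i)))"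
  proof (rule sum.cong[OF refl])
    fix i assume "i \<in> {0..k}"
    then have ik: "i \<le> k" by simp
    have "{z\<in>Zs n k. card (z \<inter> D) = i} = {z. z \<subseteq> {0..<n} \<and> card z = k \<and> card (z \<inter> D) = i}"
      unfolding Zs_def by auto
    also have "card \<dots> = (card D choose i) * ((card {0..<n} - card D) choose (k - i))"
      by (rule count_split[OF _ assms ik]) simp
    finally show "(-1)^i * real (card {z\<in>Zs n k. card (z \<inter> D) = i}) = (-1)^i * real (card D choose i) * real ((n - card D) choose (k-i))"
      by simp
  qed
  also have "\<dots> = krawtchouk n k (real (card D))" using kraw_nat[OF cD] by simp
  finally show ?thesis .
qed

lemma kraw_abs:
  assumes "d \<le> n"
  shows "\<bar>krawtchouk n k (real d)\<bar> \<le> real (n choose k)"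
proof -
  have D: "{0..<d} \<subseteq> {0..<n}" using assms by auto
  have "\<bar>krawtchouk n k (real d)\<bar> = \<bar>\<Sum>z\<in>Zs n k. sg {0..<d} z\<bar>" using lemA[OF D] by simp
  also have "\<dots> \<le> (\<Sum>z\<in>Zs n k. \<bar>sg {0..<d} z\<bar>)" by (rule sum_abs)
  also have "\<dots> = real (card (Zs n k))" by (simp add: sg_def)
  also have "card (Zs n k) = n choose k" unfolding Zs_def using n_subsets[of "{0..<n}" k] by simp
  finally show ?thesis .
qed

lemma card_Zs: "card (Zs n k) = n choose k"
  unfolding Zs_def using n_subsets[of "{0..<n}" k] by simp

lemma kraw_0: "krawtchouk n k 0 = real (n choose k)"
  using lemA[of "{}" n k] card_Zs[of n k] by (simp add: sg_def)


lemma sg_mult: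
  assumes "finite z" "D \<inter> E = {}"
  shows "sg D z * sg E z = sg (D \<union> E) z"
proof -
  have "z \<inter> (D \<union> E) = (z \<inter> D) \<union> (z \<inter> E)" by blast
  moreover have "card ((z \<inter> D) \<union> (z \<inter> E)) = card (z \<inter> D) + card (z \<inter> E)"
    using assms by (intro card_Un_disjoint) auto
  ultimately show ?thesis unfolding sg_def by (simp add: power_add)
qed

lemma sg_sq: "sg D z * sg D z = 1"
  unfolding sg_def by (simp flip: power_add add: power_even_eq[symmetric])

lemma sg_ge: "sg D z \<ge> -1"
  unfolding sg_def by (cases "even (card (z \<inter> D))") auto

lemma sum_ifeq:
  fixes A Bv :: real
  assumes "t < L"
  shows "(\<Sum>t'<L. if t = t' then A else Bv) = A + (real L - 1) * Bv"
proof -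
  have "(\<Sum>t'<L. if t = t' then A else Bv) = (\<Sum>t'<L. Bv + (if t = t' then A - Bv else 0))"
    by (rule sum.cong) auto
  also have "\<dots> = real L * Bv + (A - Bv)" using assms by (simp add: sum.distrib)
  finally show ?thesis by (simp add: algebra_simps)
qed

lemma key:
  assumes "p + L * j \<le> n"
  shows "real L * (krawtchouk n k 0 + krawtchouk n k (real p))
       + real L * (real L - 1) * (krawtchouk n k (real (2*j)) + krawtchouk n k (real (2*j+p))) \<ge> 0"
proof -
  define P where "P = {0..<p}"
  define B where "B = (\<lambda>t. {p + t*j ..< p + t*j + j})"
  define A where "A = krawtchouk n k 0 + krawtchouk n k (real p)"
  define Bv where "Bv = krawtchouk n k (real (2*j)) + krawtchouk n k (real (2*j+p))"
  have Bsub: "B t \<subseteq> {0..<n}" if "t < L" for t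
  proof -
    have "t * j + j \<le> L * j" using that by (metis add.commute mult_Suc less_eq_Suc_le mult_le_mono1)
    then show ?thesis unfolding B_def using assms by auto
  qed
  have Psub: "P \<subseteq> {0..<n}" unfolding P_def using assms by auto
  have PB: "P \<inter> B t = {}" for t unfolding P_def B_def by auto
  have BB: "B t \<inter> B t' = {}" if "t \<noteq> t'" for t t'
  proof (cases "t < t'")
    case True
    then have "t * j + j \<le> t' * j" by (metis add.commute mult_Suc less_eq_Suc_le mult_le_mono1)
    then show ?thesis unfolding B_def by auto
  next
    case False
    then have "t' < t" using that by simp
    then have "t' * j + j \<le> t * j" by (metis add.commute mult_Suc less_eq_Suc_le mult_le_mono1)
    then show ?thesis unfolding B_def by auto
  qed
  have cB: "card (B t) = j" for t unfolding B_def by simp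
  have fB: "finite (B t)" for t unfolding B_def by simp
  have cBB: "card (B t \<union> B t') = 2*j" if "t \<noteq> t'" for t t'
    using card_Un_disjoint[OF fB fB BB[OF that]] cB by simp
  have cPBB: "card (P \<union> (B t \<union> B t')) = 2*j + p" if "t \<noteq> t'" for t t'
  proof -
    have "P \<inter> (B t \<union> B t') = {}" using PB by blast
    then have "card (P \<union> (B t \<union> B t')) = card P + card (B t \<union> B t')"
      by (intro card_Un_disjoint) (auto simp: P_def fB)
    then show ?thesis using cBB[OF that] by (simp add: P_def)
  qed
  have fz: "finite z" if "z \<in> Zs n k" for z
    using that unfolding Zs_def using finite_subset by blast
  have g: "(\<Sum>z\<in>Zs n k. (1 + sg P z) * (sg (B t) z * sg (B t') z)) = (if t = t' then A else Bv)"
    if "t < L" "t' < L" for t t'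
  proof (cases "t = t'")
    case True
    have "(\<Sum>z\<in>Zs n k. (1 + sg P z) * (sg (B t) z * sg (B t') z)) = (\<Sum>z\<in>Zs n k. sg {} z + sg P z)"
      using True by (intro sum.cong) (auto simp: sg_sq sg_def)
    also have "\<dots> = A" unfolding A_def sum.distrib
      using lemA[of "{}" n k] lemA[OF Psub, of k] by (simp add: P_def)
    finally show ?thesis using True by simp
  next
    case False
    have "(\<Sum>z\<in>Zs n k. (1 + sg P z) * (sg (B t) z * sg (B t') z))
        = (\<Sum>z\<in>Zs n k. sg (B t \<union> B t') z + sg (P \<union> (B t \<union> B t')) z)"
    proof (intro sum.cong refl)
      fix z assume "z \<in> Zs n k"
      then have f: "finite z" by (rule fz)
      have "sg (B t) z * sg (B t') z = sg (B t \<union> B t') z" by (rule sg_mult[OF f BB[OF False]])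
      moreover have "sg P z * sg (B t \<union> B t') z = sg (P \<union> (B t \<union> B t')) z"
        by (rule sg_mult[OF f]) (use PB in blast)
      ultimately show "(1 + sg P z) * (sg (B t) z * sg (B t') z) = sg (B t \<union> B t') z + sg (P \<union> (B t \<union> B t')) z"
        by (simp add: algebra_simps)
    qed
    also have "\<dots> = Bv" unfolding Bv_def sum.distrib
      using lemA[of "B t \<union> B t'" n k] lemA[of "P \<union> (B t \<union> B t')" n k]
        Bsub[OF that(1)] Bsub[OF that(2)] Psub cBB[OF False] cPBB[OF False] by simp
    finally show ?thesis using False by simp
  qed
  have "0 \<le> (\<Sum>z\<in>Zs n k. (1 + sg P z) * (\<Sum>t<L. sg (B t) z)^2)"
  proof (intro sum_nonneg mult_nonneg_nonneg)
    fix z show "0 \<le> 1 + sg P z" using sg_ge[of P z] by linarith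
  qed simp
  also have "\<dots> = (\<Sum>z\<in>Zs n k. \<Sum>t<L. \<Sum>t'<L. (1 + sg P z) * (sg (B t) z * sg (B t') z))"
  proof (intro sum.cong refl)
    fix z
    have "(\<Sum>t<L. sg (B t) z)^2 = (\<Sum>t<L. \<Sum>t'<L. sg (B t) z * sg (B t') z)"
      unfolding power2_eq_square by (rule sum_product)
    then show "(1 + sg P z) * (\<Sum>t<L. sg (B t) z)^2 = (\<Sum>t<L. \<Sum>t'<L. (1 + sg P z) * (sg (B t) z * sg (B t') z))"
      by (simp only: sum_distrib_left)
  qed
  also have "\<dots> = (\<Sum>t<L. \<Sum>z\<in>Zs n k. \<Sum>t'<L. (1 + sg P z) * (sg (B t) z * sg (B t') z))"
    by (rule sum.swap)
  also have "\<dots> = (\<Sum>t<L. \<Sum>t'<L. \<Sum>z\<in>Zs n k. (1 + sg P z) * (sg (B t) z * sg (B t') z))"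
    by (intro sum.cong refl) (rule sum.swap)
  also have "\<dots> = (\<Sum>t<L. \<Sum>t'<L. if t = t' then A else Bv)"
    by (intro sum.cong refl) (simp add: g)
  also have "\<dots> = (\<Sum>t<L. A + (real L - 1) * Bv)"
    by (intro sum.cong refl) (simp add: sum_ifeq)
  also have "\<dots> = real L * A + real L * (real L - 1) * Bv" by (simp add: algebra_simps)
  finally show ?thesis unfolding A_def Bv_def by simp
qed


lemma zero_feasible: "(\<lambda>_. 0) \<in> phi_feasible m n"
  unfolding phi_feasible_def by simp

lemma zero_obj: "phi_obj m n a (\<lambda>_. 0) = 0"
  unfolding phi_obj_def by simp

lemma PhiBar_le:
  assumes "\<And>x. x \<in> phi_feasible m n \<Longrightarrow> phi_obj m n a x \<le> B"
  shows "PhiBar m n a \<le> B"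
  unfolding PhiBar_def using zero_feasible assms by (intro cSUP_least) auto

lemma PhiBar_ge:
  assumes "\<And>x. x \<in> phi_feasible m n \<Longrightarrow> phi_obj m n a x \<le> B"
    and "y \<in> phi_feasible m n"
  shows "phi_obj m n a y \<le> PhiBar m n a"
  unfolding PhiBar_def using assms by (intro cSUP_upper) (auto simp: bdd_above_def)

lemma feas_nonneg:
  assumes "x \<in> phi_feasible m n" "\<And>k. k \<in> {1..n} \<Longrightarrow> g k \<ge> 0"
  shows "(\<Sum>k=1..n. g k * x k) \<ge> 0"
  using assms unfolding phi_feasible_def by (intro sum_nonneg mult_nonneg_nonneg) auto

lemma feas_con:
  assumes "x \<in> phi_feasible m n" "i \<in> {1..n}" "i \<noteq> m"
  shows "(\<Sum>k=1..n. (krawtchouk n k (real m) - krawtchouk n k (real i)) * x k) \<ge> -1"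
  using assms unfolding phi_feasible_def by auto

lemma even_upper:
  assumes "0 < a" "m = 2*j" "L * j \<le> n" "real L - 1 \<ge> 1/a - 1" "1/a - 1 \<ge> 1"
    and x: "x \<in> phi_feasible m n"
  shows "phi_obj m n a x \<le> 0"
proof -
  define c where "c = 1/a - 1"
  have L1: "real L - 1 \<ge> 1" using assms c_def by linarith
  have g: "krawtchouk n k 0 + c * krawtchouk n k (real m) \<ge> 0" for k
  proof -
    have "real L * (krawtchouk n k 0 + krawtchouk n k (real 0))
       + real L * (real L - 1) * (krawtchouk n k (real (2*j)) + krawtchouk n k (real (2*j+0))) \<ge> 0"
      by (rule key) (use assms in simp)
    then have "2 * real L * (krawtchouk n k 0 + (real L - 1) * krawtchouk n k (real m)) \<ge> 0"
      using assms(2) by (simp add: algebra_simps)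
    moreover have "real L > 0" using L1 by simp
    ultimately have h: "krawtchouk n k 0 + (real L - 1) * krawtchouk n k (real m) \<ge> 0"
      by (simp add: zero_le_mult_iff)
    have K0: "krawtchouk n k 0 \<ge> 0" by (simp add: kraw_0)
    show ?thesis
    proof (cases "krawtchouk n k (real m) \<ge> 0")
      case True
      have "c \<ge> 0" using assms(5) unfolding c_def by linarith
      then show ?thesis using True K0 by simp
    next
      case False
      have "c * krawtchouk n k (real m) \<ge> (real L - 1) * krawtchouk n k (real m)"
        using False assms c_def by (intro mult_right_mono_neg) auto
      then show ?thesis using h by linarith
    qed
  qed
  have "(\<Sum>k=1..n. (krawtchouk n k 0 + c * krawtchouk n k (real m)) * x k) \<ge> 0"
    by (rule feas_nonneg[OF x]) (use g in auto)
  then show ?thesis unfolding phi_obj_def c_def by simp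
qed


lemma odd_upper:
  assumes "0 < a" "m = 2*j+1" "1 + L * j \<le> n" "m \<le> n" "j \<ge> 1"
    and Lc: "real L - 1 \<ge> (1/a - 1) + 1" and c1: "1/a - 1 \<ge> 1"
    and x: "x \<in> phi_feasible m n"
  shows "phi_obj m n a x \<le> ((1/a - 1) - 1) / (2 - 2 / (real L - 1))"
proof -
  define c where "c = 1/a - 1"
  define \<eta> where "\<eta> = 2 / (real L - 1)"
  define \<beta> where "\<beta> = (c - 1) / (2 - \<eta>)"
  define \<alpha> where "\<alpha> = 1 - \<beta> * \<eta>"
  have L2: "real L - 1 \<ge> 2" using Lc c1 by linarith
  have eta0: "\<eta> > 0" "\<eta> \<le> 1" using L2 unfolding \<eta>_def by (auto simp: field_simps)
  have beta0: "\<beta> \<ge> 0" unfolding \<beta>_def using eta0 c1 c_def by auto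
  have e1: "\<alpha> + \<beta> * \<eta> = 1" unfolding \<alpha>_def by simp
  have e2: "\<alpha> + 2 * \<beta> = c"
  proof -
    have "\<beta> * (2 - \<eta>) = c - 1" unfolding \<beta>_def using eta0 by simp
    then show ?thesis unfolding \<alpha>_def by (simp add: algebra_simps)
  qed
  have alpha0: "\<alpha> \<ge> 0"
  proof -
    have "c * \<eta> \<le> 2" unfolding \<eta>_def using Lc L2 c_def by (simp add: field_simps)
    then have "(c - 1) * \<eta> \<le> 2 - \<eta>" by (simp add: algebra_simps)
    then have "\<beta> * \<eta> \<le> 1" unfolding \<beta>_def using eta0 by (simp add: field_simps)
    then show ?thesis unfolding \<alpha>_def by simp
  qed
  have n1: "1 \<le> n" using assms by simp
  let ?K = "\<lambda>k d. krawtchouk n k (real d)"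
  have h1: "?K k 0 + ?K k m \<ge> 0" for k
    using kraw_abs[OF assms(4), of k] kraw_0[of n k] by simp
  have h2: "?K k (m-1) + ?K k m + \<eta> * ?K k 0 \<ge> 0" for k
  proof -
    have "real L * (krawtchouk n k 0 + krawtchouk n k (real 1))
       + real L * (real L - 1) * (krawtchouk n k (real (2*j)) + krawtchouk n k (real (2*j+1))) \<ge> 0"
      by (rule key) (use assms in simp)
    then have "real L * ((?K k 0 + ?K k 1) + (real L - 1) * (?K k (2*j) + ?K k (2*j+1))) \<ge> 0"
      by (simp add: algebra_simps)
    moreover have "real L > 0" using L2 by simp
    ultimately have h0: "(?K k 0 + ?K k 1) + (real L - 1) * (?K k (2*j) + ?K k (2*j+1)) \<ge> 0"
      by (simp add: zero_le_mult_iff)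
    have "m - 1 = 2*j" using assms(2) by simp
    then have h: "(?K k 0 + ?K k 1) + (real L - 1) * (?K k (m-1) + ?K k m) \<ge> 0"
      using h0 assms(2) by simp
    have "?K k 1 \<le> ?K k 0" using kraw_abs[OF n1, of k] kraw_0[of n k] by simp
    with h have h': "(real L - 1) * (?K k (m-1) + ?K k m) + 2 * ?K k 0 \<ge> 0" by simp
    have "?K k (m-1) + ?K k m + \<eta> * ?K k 0 = ((real L - 1) * (?K k (m-1) + ?K k m) + 2 * ?K k 0) / (real L - 1)"
      unfolding \<eta>_def using L2 by (simp add: field_simps)
    also have "\<dots> \<ge> 0" using h' L2 by simp
    finally show ?thesis .
  qed
  define s1 where "s1 = (\<Sum>k=1..n. (?K k 0 + ?K k m) * x k)"
  define s2 where "s2 = (\<Sum>k=1..n. (?K k (m-1) + ?K k m + \<eta> * ?K k 0) * x k)"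
  define s3 where "s3 = (\<Sum>k=1..n. (?K k m - ?K k (m-1)) * x k)"
  have s1: "s1 \<ge> 0" unfolding s1_def by (rule feas_nonneg[OF x]) (use h1 in auto)
  have s2: "s2 \<ge> 0" unfolding s2_def by (rule feas_nonneg[OF x]) (use h2 in auto)
  have s3: "s3 \<ge> -1" unfolding s3_def by (rule feas_con[OF x]) (use assms in auto)
  have "(\<Sum>k=1..n. (?K k 0 + c * ?K k m) * x k) = \<alpha> * s1 + \<beta> * s2 + \<beta> * s3"
  proof -
    have "\<alpha> * s1 + \<beta> * s2 + \<beta> * s3 = (\<Sum>k=1..n. \<alpha> * ((?K k 0 + ?K k m) * x k)
        + \<beta> * ((?K k (m-1) + ?K k m + \<eta> * ?K k 0) * x k) + \<beta> * ((?K k m - ?K k (m-1)) * x k))"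
      unfolding s1_def s2_def s3_def by (simp add: sum.distrib sum_distrib_left)
    also have "\<dots> = (\<Sum>k=1..n. ((\<alpha> + \<beta> * \<eta>) * ?K k 0 + (\<alpha> + 2 * \<beta>) * ?K k m) * x k)"
      by (intro sum.cong refl) (simp add: algebra_simps)
    also have "\<dots> = (\<Sum>k=1..n. (?K k 0 + c * ?K k m) * x k)" using e1 e2 by simp
    finally show ?thesis by simp
  qed
  moreover have "\<alpha> * s1 \<ge> 0" "\<beta> * s2 \<ge> 0" using alpha0 beta0 s1 s2 by auto
  moreover have "\<beta> * s3 \<ge> - \<beta>" using beta0 s3 by (metis mult_left_mono mult_minus1_right)
  ultimately have "phi_obj m n a x \<le> \<beta>" unfolding phi_obj_def c_def by simp
  then show ?thesis
    unfolding \<beta>_def \<eta>_def c_def .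
qed


lemma Zs_nn: "Zs n n = {{0..<n}}"
proof -
  have "z = {0..<n}" if "z \<subseteq> {0..<n}" "card z = n" for z
    using that card_subset_eq[of "{0..<n}" z] by simp
  then show ?thesis unfolding Zs_def by auto
qed

lemma kraw_nn:
  assumes "i \<le> n"
  shows "krawtchouk n n (real i) = (-1)^i"
proof -
  have "krawtchouk n n (real (card {0..<i})) = (\<Sum>z\<in>Zs n n. sg {0..<i} z)"
    by (rule lemA[symmetric]) (use assms in auto)
  also have "\<dots> = sg {0..<i} {0..<n}" by (simp add: Zs_nn)
  also have "\<dots> = (-1)^i" unfolding sg_def using assms by (simp add: min_def)
  finally show ?thesis by simp
qed

lemma odd_lower:
  assumes "odd m" "m \<le> n" "1 \<le> m" "0 < a" "a \<le> 1/2"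
  shows "phi_obj m n a (\<lambda>k. if k = n then 1/2 else 0) = 1 / (2*a) - 1"
    and "(\<lambda>k. if k = n then 1/2 else 0) \<in> phi_feasible m n"
proof -
  let ?x = "\<lambda>k::nat. if k = n then (1/2::real) else 0"
  have n1: "n \<in> {1..n}" using assms by simp
  have sx: "(\<Sum>k=1..n. g k * ?x k) = g n / 2" for g :: "nat \<Rightarrow> real"
  proof -
    have "(\<Sum>k=1..n. g k * ?x k) = (\<Sum>k=1..n. if k = n then g k / 2 else 0)"
      by (intro sum.cong refl) auto
    also have "\<dots> = g n / 2" using n1 by (simp add: sum.delta')
    finally show ?thesis .
  qed
  have Km: "krawtchouk n n (real m) = -1" using kraw_nn[OF assms(2)] assms(1) by simp
  have K0: "krawtchouk n n 0 = 1" using kraw_nn[of 0 n] by simp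
  show "phi_obj m n a ?x = 1 / (2*a) - 1"
    unfolding phi_obj_def sx Km K0 using assms by (simp add: field_simps)
  show "?x \<in> phi_feasible m n"
    unfolding phi_feasible_def
  proof (intro CollectI conjI ballI)
    fix k show "0 \<le> ?x k" by simp
  next
    fix i assume "i \<in> {1..n} - {m}"
    then have "i \<le> n" by simp
    then have "krawtchouk n n (real i) = (-1)^i" by (rule kraw_nn)
    moreover have "(-1::real)^i \<le> 1" by (cases "even i") auto
    ultimately show "(\<Sum>k=1..n. (krawtchouk n k (real m) - krawtchouk n k (real i)) * ?x k) \<ge> -1"
      unfolding sx Km by simp
  qed
qed

lemma div_at_top:
  assumes "j > 0"
  shows "filterlim (\<lambda>n::nat. real ((n - 1) div j) - 1) at_top sequentially"
  unfolding filterlim_at_top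
proof
  fix Z :: real
  define q where "q = nat \<lceil>Z\<rceil> + 1"
  have "Z \<le> real ((n - 1) div j) - 1" if "n \<ge> q * j + 1" for n
  proof -
    have "q \<le> (n - 1) div j" using that assms by (simp add: less_eq_div_iff_mult_less_eq)
    then have "real q \<le> real ((n - 1) div j)" by simp
    moreover have "Z \<le> real q - 1" unfolding q_def by linarith
    ultimately show ?thesis by linarith
  qed
  then show "eventually (\<lambda>n. Z \<le> real ((n - 1) div j) - 1) sequentially"
    unfolding eventually_sequentially by blast
qed


theorem theorem4:
  fixes a :: real and m :: nat
  assumes "0 < a" and "a \<le> 1/2" and "m \<ge> 2"
  shows "(\<lambda>n. PhiBar m n a) \<longlonglongrightarrow> (if even m then 0 else 1 / (2 * a) - 1)"
proof -
  have c1: "1/a - 1 \<ge> 1" using assms by (simp add: field_simps)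
  define Q where "Q = nat \<lceil>1/a\<rceil> + 1"
  have Qa: "real Q - 1 \<ge> 1/a" unfolding Q_def by linarith
  show ?thesis
  proof (cases "even m")
    case True
    then obtain j where mj: "m = 2*j" by blast
    have j1: "j \<ge> 1" using mj assms by simp
    have "eventually (\<lambda>n. PhiBar m n a = 0) sequentially"
      unfolding eventually_sequentially
    proof (intro exI allI impI)
      fix n assume n: "n \<ge> Q * j"
      define L where "L = n div j"
      have "Q \<le> L" unfolding L_def using n j1 by (simp add: less_eq_div_iff_mult_less_eq)
      then have Lr: "real L - 1 \<ge> 1/a - 1" using Qa by linarith
      have Lj: "L * j \<le> n" unfolding L_def by simp
      have bnd: "\<And>x. x \<in> phi_feasible m n \<Longrightarrow> phi_obj m n a x \<le> 0"
        by (rule even_upper[OF assms(1) mj Lj Lr c1])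
      have up: "PhiBar m n a \<le> 0" by (rule PhiBar_le[OF bnd])
      have "0 \<le> PhiBar m n a"
        using PhiBar_ge[OF bnd zero_feasible] zero_obj by simp
      with up show "PhiBar m n a = 0" by simp
    qed
    then show ?thesis using True by (simp add: tendsto_eventually)
  next
    case False
    then obtain j where mj: "m = 2*j+1" using oddE by blast
    have j1: "j \<ge> 1" using mj assms by simp
    define u where "u = (\<lambda>n::nat. ((1/a - 1) - 1) / (2 - 2 / (real ((n - 1) div j) - 1)))"
    have lim0: "(\<lambda>n::nat. 2 / (real ((n - 1) div j) - 1)) \<longlonglongrightarrow> 0"
      by (rule tendsto_divide_0[OF tendsto_const filterlim_at_top_imp_at_infinity[OF div_at_top]])
         (use j1 in simp)
    have "u \<longlonglongrightarrow> ((1/a - 1) - 1) / (2 - 0)"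
      unfolding u_def by (intro tendsto_intros lim0) simp
    moreover have "((1/a - 1) - 1) / (2 - 0) = 1 / (2*a) - 1" using assms(1) by (simp add: field_simps)
    ultimately have ulim: "u \<longlonglongrightarrow> 1 / (2*a) - 1" by (rule back_subst)
    have ev: "eventually (\<lambda>n. 1/(2*a) - 1 \<le> PhiBar m n a \<and> PhiBar m n a \<le> u n) sequentially"
      unfolding eventually_sequentially
    proof (intro exI allI impI)
      fix n assume n: "n \<ge> Q * j + 1 + m"
      define L where "L = (n - 1) div j"
      have "Q \<le> L" unfolding L_def using n j1 by (simp add: less_eq_div_iff_mult_less_eq)
      then have Lr: "real L - 1 \<ge> (1/a - 1) + 1" using Qa by linarith
      have Lj: "1 + L * j \<le> n" unfolding L_def using n div_times_less_eq_dividend[of "n-1" j] by linarith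
      have mn: "m \<le> n" using n by simp
      have bnd: "\<And>x. x \<in> phi_feasible m n \<Longrightarrow> phi_obj m n a x \<le> u n"
        using odd_upper[OF assms(1) mj Lj mn j1 Lr c1] unfolding u_def L_def .
      have up: "PhiBar m n a \<le> u n" by (rule PhiBar_le[OF bnd])
      have "1/(2*a) - 1 \<le> PhiBar m n a"
        using PhiBar_ge[OF bnd odd_lower(2)] odd_lower(1) False mn assms by simp
      with up show "1/(2*a) - 1 \<le> PhiBar m n a \<and> PhiBar m n a \<le> u n" by simp
    qed
    have "(\<lambda>n. PhiBar m n a) \<longlonglongrightarrow> 1 / (2*a) - 1"
      by (rule tendsto_sandwich[OF _ _ tendsto_const ulim]) (use ev in \<open>auto elim: eventually_mono\<close>)
    then show ?thesis using False by simp
  qed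
qed

end
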